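(* Let $n\ge 2$ and let $\chi$ be a simple game on $N=\{1,\dots,n\}$. For any two voters $i,j\in N$, either $\mathcal{BZ}(\chi,i)=\mathcal{BZ}(\chi,j)$ or $$\left|\mathcal{BZ}(\chi,i)-\mathcal{BZ}(\chi,j)\right|\ge\frac{2}{\left(\lfloor n/2\rfloor+1\right)\binom{n}{\lfloor n/2\rfloor+1}}.$$
   Context: A simple game on $N=\{1,\dots,n\}$ is a monotone Boolean function $\chi:2^N\to\{0,1\}$ (i.e. $\chi(U)\le\chi(U')$ for $U\subseteq U'$) with $\chi(\emptyset)=0$ and $\chi(N)=1$. An $i$-swing is a set $U\subseteq N\setminus\{i\}$ with $\chi(U)=0$ and $\chi(U\cup\{i\})=1$. The Banzhaf index is $\mathcal{BZ}(\chi,i)=\eta_i/m$, where $\eta_i$ is the number of $i$-swings and $m=\sum_{k=1}^n\eta_k$ is the total number of swings. *)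

theory Defs
  imports Complex_Main
begin

definition simple_game :: "nat \<Rightarrow> (nat set \<Rightarrow> bool) \<Rightarrow> bool" where
  "simple_game n \<chi> \<longleftrightarrow>
     (\<forall>U U'. U \<subseteq> U' \<and> U' \<subseteq> {1..n} \<and> \<chi> U \<longrightarrow> \<chi> U') \<and>
     \<not> \<chi> {} \<and> \<chi> {1..n}"

definition swings :: "nat \<Rightarrow> (nat set \<Rightarrow> bool) \<Rightarrow> nat \<Rightarrow> nat set set" where
  "swings n \<chi> i = {U. U \<subseteq> {1..n} - {i} \<and> \<not> \<chi> U \<and> \<chi> (insert i U)}"

definition eta :: "nat \<Rightarrow> (nat set \<Rightarrow> bool) \<Rightarrow> nat \<Rightarrow> nat" where
  "eta n \<chi> i = card (swings n \<chi> i)"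

definition total_swings :: "nat \<Rightarrow> (nat set \<Rightarrow> bool) \<Rightarrow> nat" where
  "total_swings n \<chi> = (\<Sum>k\<in>{1..n}. eta n \<chi> k)"

definition banzhaf :: "nat \<Rightarrow> (nat set \<Rightarrow> bool) \<Rightarrow> nat \<Rightarrow> real" where
  "banzhaf n \<chi> i = real (eta n \<chi> i) / real (total_swings n \<chi>)"

end

theory Submission
  imports Defs
begin

definition lev :: "nat \<Rightarrow> (nat set \<Rightarrow> bool) \<Rightarrow> nat \<Rightarrow> nat set set" where
  "lev n \<chi> k = {W. W \<subseteq> {1..n} \<and> card W = k \<and> \<chi> W}"

definition ecnt :: "nat \<Rightarrow> (nat set \<Rightarrow> bool) \<Rightarrow> nat \<Rightarrow> nat" where
  "ecnt n \<chi> k = card (Sigma (lev n \<chi> k) (\<lambda>W. {i\<in>W. \<not> \<chi> (W - {i})}))"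

lemma sg_mono:
  assumes "simple_game n \<chi>" "U \<subseteq> U'" "U' \<subseteq> {1..n}" "\<chi> U"
  shows "\<chi> U'"
  using assms unfolding simple_game_def by blast

lemma fin_lev: "finite (lev n \<chi> k)"
  by (rule finite_subset[of _ "Pow {1..n}"]) (auto simp: lev_def)

lemma binom_step: "j < n \<Longrightarrow> Suc j * (n choose Suc j) = (n - j) * (n choose j)"
proof -
  assume "j < n"
  then obtain m where m: "n = Suc m" by (cases n) auto
  have "Suc j * (n choose Suc j) = n * (m choose j)" using Suc_times_binomial[of j m] m by simp
  also have "\<dots> = (n - j) * (n choose j)"
    using binomial_absorb_comp[of n j] m by simp
  finally show ?thesis .
qed

lemma binom_bound:
  assumes "j < n"
  shows "Suc j * (n choose Suc j) \<le> Suc (n div 2) * (n choose Suc (n div 2))"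
proof -
  obtain m where m: "n = Suc m" using assms by (cases n) auto
  have 1: "Suc j * (n choose Suc j) = n * (m choose j)" using Suc_times_binomial[of j m] m by simp
  have 2: "Suc (n div 2) * (n choose Suc (n div 2)) = n * (m choose (n div 2))"
    using Suc_times_binomial[of "n div 2" m] m by simp
  have "m choose (n div 2) = m choose (m div 2)"
  proof (cases "even n")
    case True
    then have "m - n div 2 = m div 2" "n div 2 \<le> m" using m by presburger+
    then show ?thesis using binomial_symmetric[of "n div 2" m] by simp
  next
    case False
    then have "n div 2 = m div 2" using m by presburger
    then show ?thesis by simp
  qed
  then show ?thesis using 1 2 binomial_maximum[of m j] by simp
qed

lemma level_identity:
  assumes sg: "simple_game n \<chi>" and jn: "Suc j \<le> n"
  shows "Suc j * card (lev n \<chi> (Suc j)) = ecnt n \<chi> (Suc j) + (n - j) * card (lev n \<chi> j)"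
proof -
  let ?N = "{1..n::nat}"
  let ?A = "lev n \<chi> (Suc j)"
  let ?B = "lev n \<chi> j"
  let ?E = "Sigma ?A (\<lambda>W. {i\<in>W. \<not> \<chi> (W - {i})})"
  let ?F = "Sigma ?A (\<lambda>W. {i\<in>W. \<chi> (W - {i})})"
  let ?G = "Sigma ?B (\<lambda>V. ?N - V)"
  have finA: "finite ?A" "finite ?B" by (rule fin_lev)+
  have finW: "\<And>W. W \<in> lev n \<chi> k \<Longrightarrow> finite W" for k
    by (auto simp: lev_def intro: finite_subset)
  have "card (Sigma ?A (\<lambda>W. W)) = (\<Sum>W\<in>?A. card W)"
    using finA finW by (simp add: card_SigmaI)
  also have "\<dots> = Suc j * card ?A" by (simp add: lev_def)
  finally have c1: "card (Sigma ?A (\<lambda>W. W)) = Suc j * card ?A" .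
  have "Sigma ?A (\<lambda>W. W) = ?E \<union> ?F" by auto
  moreover have "?E \<inter> ?F = {}" by auto
  moreover have "finite ?E" "finite ?F" using finA finW by (auto intro!: finite_SigmaI)
  ultimately have c2: "card (Sigma ?A (\<lambda>W. W)) = card ?E + card ?F"
    by (simp add: card_Un_disjoint)
  have bij: "bij_betw (\<lambda>(W,i). (W - {i}, i)) ?F ?G"
  proof (rule bij_betw_byWitness[where f' = "\<lambda>(V,i). (insert i V, i)"])
    show "\<forall>a\<in>?F. (\<lambda>(V,i). (insert i V, i)) ((\<lambda>(W,i). (W - {i}, i)) a) = a"
      by auto
    show "\<forall>a\<in>?G. (\<lambda>(W,i). (W - {i}, i)) ((\<lambda>(V,i). (insert i V, i)) a) = a"
      by (auto simp: lev_def)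
    show "(\<lambda>(W,i). (W - {i}, i)) ` ?F \<subseteq> ?G"
    proof (rule image_subsetI)
      fix x assume x: "x \<in> ?F"
      obtain W i where x': "x = (W, i)" by (cases x)
      have "W \<in> ?A" "i \<in> W" "\<chi> (W - {i})" using x x' by auto
      then show "(\<lambda>(W,i). (W - {i}, i)) x \<in> ?G" using finW[of W "Suc j"] x'
        by (auto simp: lev_def)
    qed
    show "(\<lambda>(V,i). (insert i V, i)) ` ?G \<subseteq> ?F"
    proof (rule image_subsetI)
      fix x assume x: "x \<in> ?G"
      obtain V i where x': "x = (V, i)" by (cases x)
      have V: "V \<in> ?B" "i \<in> ?N - V" using x x' by auto
      then have fV: "finite V" using finW by blast
      have "\<chi> (insert i V)" using sg_mono[OF sg, of V "insert i V"] V by (auto simp: lev_def)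
      moreover have "insert i V - {i} = V" using V by auto
      ultimately show "(\<lambda>(V,i). (insert i V, i)) x \<in> ?F" using V fV x' by (auto simp: lev_def)
    qed
  qed
  have c3: "card ?F = card ?G" using bij_betw_same_card[OF bij] .
  have "card ?G = (\<Sum>V\<in>?B. card (?N - V))" using finA by (simp add: card_SigmaI)
  also have "\<dots> = (\<Sum>V\<in>?B. n - j)"
    by (rule sum.cong) (auto simp: lev_def card_Diff_subset finite_subset)
  finally have c4: "card ?G = (n - j) * card ?B" by simp
  show ?thesis using c1 c2 c3 c4 by (simp add: ecnt_def)
qed


lemma lev0: "simple_game n \<chi> \<Longrightarrow> lev n \<chi> 0 = {}"
  by (auto simp: lev_def simple_game_def dest: finite_subset)

lemma levn: "simple_game n \<chi> \<Longrightarrow> lev n \<chi> n = {{1..n}}"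
proof -
  assume sg: "simple_game n \<chi>"
  have "W = {1..n}" if "W \<subseteq> {1..n}" "card W = n" for W
    using card_subset_eq[of "{1..n}" W] that by simp
  then show ?thesis using sg by (auto simp: lev_def simple_game_def)
qed

lemma total_eq:
  assumes sg: "simple_game n \<chi>"
  shows "total_swings n \<chi> = (\<Sum>j<n. ecnt n \<chi> (Suc j))"
proof -
  let ?N = "{1..n::nat}"
  let ?S = "Sigma ?N (swings n \<chi>)"
  let ?h = "\<lambda>W. card {i\<in>W. \<chi> W \<and> \<not> \<chi> (W - {i})}"
  let ?E = "Sigma (Pow ?N) (\<lambda>W. {i\<in>W. \<chi> W \<and> \<not> \<chi> (W - {i})})"
  have finsw: "finite (swings n \<chi> i)" for i
    by (rule finite_subset[of _ "Pow ?N"]) (auto simp: swings_def)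
  have "total_swings n \<chi> = card ?S"
    using finsw by (simp add: total_swings_def eta_def card_SigmaI)
  also have "\<dots> = card ?E"
  proof (rule bij_betw_same_card, rule bij_betw_byWitness[where f' = "\<lambda>(W,i). (i, W - {i})"])
    show "\<forall>a\<in>?S. (\<lambda>(W,i). (i, W - {i})) ((\<lambda>(i,U). (insert i U, i)) a) = a"
      by (auto simp: swings_def)
    show "\<forall>a\<in>?E. (\<lambda>(i,U). (insert i U, i)) ((\<lambda>(W,i). (i, W - {i})) a) = a"
      by auto
    show "(\<lambda>(i,U). (insert i U, i)) ` ?S \<subseteq> ?E"
    proof (rule image_subsetI)
      fix x assume x: "x \<in> ?S"
      obtain i U where x': "x = (i, U)" by (cases x)
      have "i \<in> ?N" "U \<subseteq> ?N - {i}" "\<not> \<chi> U" "\<chi> (insert i U)"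
        using x x' by (auto simp: swings_def)
      moreover have "insert i U - {i} = U" using calculation by auto
      ultimately show "(\<lambda>(i,U). (insert i U, i)) x \<in> ?E" using x' by auto
    qed
    show "(\<lambda>(W,i). (i, W - {i})) ` ?E \<subseteq> ?S"
      by (auto simp: swings_def insert_absorb)
  qed
  also have "\<dots> = (\<Sum>W\<in>Pow ?N. ?h W)"
    by (rule card_SigmaI) (auto intro: finite_subset)
  also have "\<dots> = (\<Sum>k\<in>{..<Suc n}. (\<Sum>W\<in>{W. W \<in> Pow ?N \<and> card W = k}. ?h W))"
    by (rule sum.group[symmetric]) (auto simp: less_Suc_eq_le dest!: card_mono[OF finite_atLeastAtMost])
  also have "\<dots> = (\<Sum>k\<in>{..<Suc n}. ecnt n \<chi> k)"
  proof (rule sum.cong[OF refl])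
    fix k
    have "ecnt n \<chi> k = (\<Sum>W\<in>lev n \<chi> k. card {i\<in>W. \<not> \<chi> (W - {i})})"
      unfolding ecnt_def using fin_lev
      by (rule card_SigmaI) (auto simp: lev_def intro: finite_subset)
    also have "\<dots> = (\<Sum>W\<in>{W. W \<in> Pow ?N \<and> card W = k}. ?h W)"
      by (rule sum.mono_neutral_cong_left) (auto simp: lev_def)
    finally show "(\<Sum>W\<in>{W. W \<in> Pow ?N \<and> card W = k}. ?h W) = ecnt n \<chi> k" by simp
  qed
  also have "\<dots> = (\<Sum>j<n. ecnt n \<chi> (Suc j))"
    by (simp only: sum.lessThan_Suc_shift) (simp add: ecnt_def lev0[OF sg])
  finally show ?thesis .
qed

lemma total_bound:
  assumes sg: "simple_game n \<chi>"
  shows "real (total_swings n \<chi>) \<le> real (Suc (n div 2) * (n choose Suc (n div 2)))"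
proof -
  define M where "M = real (Suc (n div 2) * (n choose Suc (n div 2)))"
  define a where "a k = real (card (lev n \<chi> k)) / real (n choose k)" for k
  have step: "real (ecnt n \<chi> (Suc j)) \<le> M * (a (Suc j) - a j)" if j: "j < n" for j
  proof -
    define c where "c = real (Suc j * (n choose Suc j))"
    have b1: "real (n choose Suc j) > 0" "real (n choose j) > 0" using j by auto
    have c1: "c = real (Suc j) * real (n choose Suc j)" by (simp add: c_def algebra_simps)
    have c2: "c = real (n - j) * real (n choose j)"
      using binom_step[OF j] by (simp add: c_def flip: of_nat_mult)
    have id: "real (Suc j) * real (card (lev n \<chi> (Suc j))) = real (ecnt n \<chi> (Suc j)) + real (n - j) * real (card (lev n \<chi> j))"
      using arg_cong[OF level_identity[OF sg Suc_leI[OF j]], of real] by (simp only: of_nat_mult of_nat_add)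
    have e: "real (ecnt n \<chi> (Suc j)) = c * (a (Suc j) - a j)"
    proof -
      have "c * a (Suc j) = real (Suc j) * real (card (lev n \<chi> (Suc j)))"
        using b1 by (simp add: c1 a_def)
      moreover have "c * a j = real (n - j) * real (card (lev n \<chi> j))"
        using b1 by (simp add: c2 a_def)
      ultimately show ?thesis using id by (simp add: right_diff_distrib)
    qed
    have cpos: "c > 0" using b1 c1 by simp
    have "a (Suc j) - a j \<ge> 0"
    proof (rule ccontr)
      assume "\<not> ?thesis"
      then have "c * (a (Suc j) - a j) < 0" using cpos by (simp add: mult_pos_neg)
      then show False using e by linarith
    qed
    moreover have "c \<le> M" unfolding c_def M_def using binom_bound[OF j] by linarith
    ultimately show ?thesis using e mult_right_mono by metis
  qed
  have "real (total_swings n \<chi>) = (\<Sum>j<n. real (ecnt n \<chi> (Suc j)))"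
    by (simp add: total_eq[OF sg])
  also have "\<dots> \<le> (\<Sum>j<n. M * (a (Suc j) - a j))" by (rule sum_mono) (simp add: step)
  also have "\<dots> = M * (a n - a 0)"
    by (simp add: sum_distrib_left[symmetric] sum_lessThan_telescope)
  also have "\<dots> = M" by (simp add: a_def lev0[OF sg] levn[OF sg])
  finally show ?thesis by (simp add: M_def)
qed


lemma swings_split:
  assumes ij: "i \<noteq> j" "j \<in> {1..n}"
  shows "swings n \<chi> i = {S\<in>Pow ({1..n} - {i,j}). \<not> \<chi> S \<and> \<chi> (insert i S)}
     \<union> insert j ` {S\<in>Pow ({1..n} - {i,j}). \<not> \<chi> (insert j S) \<and> \<chi> (insert i (insert j S))}"
    (is "_ = ?A \<union> insert j ` ?B")
proof
  show "swings n \<chi> i \<subseteq> ?A \<union> insert j ` ?B"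
  proof
    fix U assume U: "U \<in> swings n \<chi> i"
    show "U \<in> ?A \<union> insert j ` ?B"
    proof (cases "j \<in> U")
      case False
      then show ?thesis using U by (auto simp: swings_def)
    next
      case True
      then have eq: "U = insert j (U - {j})" by auto
      have "U - {j} \<in> ?B"
        using U True ij by (auto simp: swings_def insert_absorb)
      then show ?thesis using eq by blast
    qed
  qed
  show "?A \<union> insert j ` ?B \<subseteq> swings n \<chi> i"
    using ij by (auto simp: swings_def insert_commute)
qed

lemma card_filter_sum: "finite X \<Longrightarrow> card {x\<in>X. P x} = (\<Sum>x\<in>X. if P x then 1 else 0)"
  by (simp add: sum.inter_filter[symmetric])

lemma eta_sum:
  assumes ij: "i \<noteq> j" "j \<in> {1..n}"
  shows "eta n \<chi> i = (\<Sum>S\<in>Pow ({1..n} - {i,j}).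
     (if \<not> \<chi> S \<and> \<chi> (insert i S) then 1 else 0) +
     (if \<not> \<chi> (insert j S) \<and> \<chi> (insert i (insert j S)) then 1 else 0))"
proof -
  let ?X = "Pow ({1..n} - {i,j})"
  let ?A = "{S\<in>?X. \<not> \<chi> S \<and> \<chi> (insert i S)}"
  let ?B = "{S\<in>?X. \<not> \<chi> (insert j S) \<and> \<chi> (insert i (insert j S))}"
  have fin: "finite ?X" by simp
  have inj: "inj_on (insert j) ?B"
  proof (rule inj_onI)
    fix S T assume "S \<in> ?B" "T \<in> ?B" "insert j S = insert j T"
    then have "j \<notin> S" "j \<notin> T" "insert j S - {j} = insert j T - {j}" by auto
    then show "S = T" by auto
  qed
  have "eta n \<chi> i = card (?A \<union> insert j ` ?B)"
    unfolding eta_def using swings_split[OF ij] by simp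
  also have "\<dots> = card ?A + card (insert j ` ?B)"
    by (rule card_Un_disjoint) auto
  also have "\<dots> = card ?A + card ?B" using card_image[OF inj] by simp
  also have "\<dots> = (\<Sum>S\<in>?X. (if \<not> \<chi> S \<and> \<chi> (insert i S) then 1 else 0)) +
     (\<Sum>S\<in>?X. (if \<not> \<chi> (insert j S) \<and> \<chi> (insert i (insert j S)) then 1 else 0))"
    by (simp only: card_filter_sum[OF fin])
  finally show ?thesis by (simp add: sum.distrib)
qed

lemma pointwise:
  assumes "a \<longrightarrow> b" "a \<longrightarrow> c" "b \<longrightarrow> d" "c \<longrightarrow> d"
  shows "((if \<not> a \<and> b then 1 else 0) + (if \<not> c \<and> d then 1 else 0)) + 2 * (if c \<and> \<not> b then 1 else 0)
    = ((if \<not> a \<and> c then 1 else 0) + (if \<not> b \<and> d then 1 else 0)) + 2 * (if b \<and> \<not> c then (1::nat) else 0)"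
  using assms by auto

lemma parity:
  assumes sg: "simple_game n \<chi>" and ij: "i \<noteq> j" "i \<in> {1..n}" "j \<in> {1..n}"
  shows "\<exists>p q. eta n \<chi> i + 2 * q = eta n \<chi> j + 2 * (p::nat)"
proof -
  let ?X = "Pow ({1..n} - {i,j})"
  have X': "{1..n} - {j,i} = {1..n} - {i,j}" by auto
  have ei: "eta n \<chi> i = (\<Sum>S\<in>?X.
     (if \<not> \<chi> S \<and> \<chi> (insert i S) then 1 else 0) +
     (if \<not> \<chi> (insert j S) \<and> \<chi> (insert i (insert j S)) then 1 else 0))"
    by (rule eta_sum[OF ij(1) ij(3)])
  have ej: "eta n \<chi> j = (\<Sum>S\<in>?X.
     (if \<not> \<chi> S \<and> \<chi> (insert j S) then 1 else 0) +
     (if \<not> \<chi> (insert i S) \<and> \<chi> (insert i (insert j S)) then 1 else 0))"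
    using eta_sum[of j i n \<chi>] ij by (simp add: X' insert_commute)
  let ?p = "\<Sum>S\<in>?X. if \<chi> (insert i S) \<and> \<not> \<chi> (insert j S) then 1 else (0::nat)"
  let ?q = "\<Sum>S\<in>?X. if \<chi> (insert j S) \<and> \<not> \<chi> (insert i S) then 1 else (0::nat)"
  have "eta n \<chi> i + 2 * ?q = eta n \<chi> j + 2 * ?p"
    unfolding ei ej sum_distrib_left sum.distrib[symmetric]
  proof (rule sum.cong[OF refl])
    fix S assume S: "S \<in> ?X"
    have sub: "insert i (insert j S) \<subseteq> {1..n}" "insert i S \<subseteq> {1..n}" "insert j S \<subseteq> {1..n}"
      using S ij by auto
    show "(if \<not> \<chi> S \<and> \<chi> (insert i S) then (1::nat) else 0) +
         (if \<not> \<chi> (insert j S) \<and> \<chi> (insert i (insert j S)) then 1 else 0) +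
         2 * (if \<chi> (insert j S) \<and> \<not> \<chi> (insert i S) then 1 else 0) =
         (if \<not> \<chi> S \<and> \<chi> (insert j S) then 1 else 0) +
         (if \<not> \<chi> (insert i S) \<and> \<chi> (insert i (insert j S)) then 1 else 0) +
         2 * (if \<chi> (insert i S) \<and> \<not> \<chi> (insert j S) then 1 else 0)"
    proof -
      have m1: "\<chi> S \<Longrightarrow> \<chi> (insert i S)" by (erule sg_mono[OF sg _ sub(2), rotated]) auto
      have m2: "\<chi> S \<Longrightarrow> \<chi> (insert j S)" by (erule sg_mono[OF sg _ sub(3), rotated]) auto
      have m3: "\<chi> (insert i S) \<Longrightarrow> \<chi> (insert i (insert j S))" by (erule sg_mono[OF sg _ sub(1), rotated]) auto
      have m4: "\<chi> (insert j S) \<Longrightarrow> \<chi> (insert i (insert j S))" by (erule sg_mono[OF sg _ sub(1), rotated]) auto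
      show ?thesis by (rule pointwise) (use m1 m2 m3 m4 in blast)+
    qed
  qed
  then show ?thesis by blast
qed

theorem mainTheorem6:
  fixes n :: nat and \<chi> :: "nat set \<Rightarrow> bool" and i j :: nat
  assumes "n \<ge> 2"
    and "simple_game n \<chi>"
    and "i \<in> {1..n}" and "j \<in> {1..n}"
  shows "banzhaf n \<chi> i = banzhaf n \<chi> j \<or>
         \<bar>banzhaf n \<chi> i - banzhaf n \<chi> j\<bar> \<ge>
           2 / (real (n div 2 + 1) * real (n choose (n div 2 + 1)))"
proof (cases "eta n \<chi> i = eta n \<chi> j")
  case True
  then show ?thesis by (simp add: banzhaf_def)
next
  case False
  then have ij: "i \<noteq> j" by auto
  obtain p q where pq: "eta n \<chi> i + 2 * q = eta n \<chi> j + 2 * (p::nat)"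
    using parity[OF assms(2) ij assms(3,4)] by blast
  have d: "\<bar>real (eta n \<chi> i) - real (eta n \<chi> j)\<bar> \<ge> 2"
  proof -
    have "int (eta n \<chi> i + 2 * q) = int (eta n \<chi> j + 2 * p)" using pq by simp
    then have "int (eta n \<chi> i) - int (eta n \<chi> j) = 2 * (int p - int q)" by simp
    moreover have "p \<noteq> q" using pq False by auto
    ultimately have "\<bar>int (eta n \<chi> i) - int (eta n \<chi> j)\<bar> \<ge> 2" by auto
    then show ?thesis by linarith
  qed
  define m where "m = real (total_swings n \<chi>)"
  define M where "M = real (n div 2 + 1) * real (n choose (n div 2 + 1))"
  have "eta n \<chi> i \<le> total_swings n \<chi>" "eta n \<chi> j \<le> total_swings n \<chi>"
    unfolding total_swings_def using assms(3,4)
    by (auto intro!: member_le_sum)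
  then have mpos: "m > 0" using False unfolding m_def by linarith
  have mM: "m \<le> M" using total_bound[OF assms(2)] unfolding m_def M_def by (simp add: algebra_simps)
  have "\<bar>banzhaf n \<chi> i - banzhaf n \<chi> j\<bar> = \<bar>real (eta n \<chi> i) - real (eta n \<chi> j)\<bar> / m"
    unfolding banzhaf_def m_def[symmetric] using mpos by (simp add: diff_divide_distrib[symmetric])
  also have "\<dots> \<ge> 2 / m" using d mpos by (simp add: divide_right_mono)
  moreover have "2 / m \<ge> 2 / M" using mpos mM by (simp add: frac_le)
  ultimately show ?thesis unfolding M_def by linarith
qed

end
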